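(* Let $I$ be a square-free monomial ideal of $S=K[x_1,\ldots,x_n]$ with minimal generating set $G(I)=\bigcup_{i=1}^kG_{d_i}$, where $G_{d_i}$ consists of the generators of degree $d_i$, and for $l\notin\{d_1,\ldots,d_k\}$ put $G_l=\emptyset$. Then $I$ is an $f$-ideal if and only if for each $l\in[n]$, $$|G_l|=\tfrac12\Big(C_n^l-\Big|\bigcup_{d_i>l}\sqcap^{d_i-l}(G_{d_i})\Big|-\Big|\bigcup_{d_i<l}\sqcup^{l-d_i}(G_{d_i})\Big|\Big).$$
   Context: $K$ is a field; $C_n^l$ is the binomial coefficient. For a set $A$ of square-free monomials, $\sqcup(A)=\{gx_i\mid g\in A,\ x_i\nmid g\}$ and $\sqcap(A)=\{h\ne1\mid h=g/x_i \text{ for some } g\in A,\ x_i\mid g\}$; $\sqcup^m,\sqcap^m$ are $m$-fold iterates. With $\sigma$ the bijection $x_{i_1}\cdots x_{i_k}\mapsto\{i_1,\ldots,i_k\}$, the facet complex $\delta_{\mathcal{F}}(I)$ has facets $\sigma(g)$, $g\in G(I)$, the Stanley–Reisner complex is $\delta_{\mathcal{N}}(I)=\{\sigma(g)\mid g\text{ square-free monomial},\ g\notin I\}$, and $I$ is an $f$-ideal if both complexes have the same $f$-vector. *)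

theory Defs
  imports Complex_Main
begin

(* A square-free monomial x_{i1}...x_{ik} of S = K[x_1..x_n] is identified with
   the set {i1,...,ik} (this is the bijection sigma). A square-free monomial
   ideal I is identified with the family of square-free monomials it contains,
   i.e. an upward-closed family of subsets of {1..n}. *)

definition sqfree_monomial_ideal :: "nat \<Rightarrow> nat set set \<Rightarrow> bool" where
  "sqfree_monomial_ideal n I \<longleftrightarrow> I \<subseteq> Pow {1..n} \<and>
     (\<forall>g\<in>I. \<forall>h. g \<subseteq> h \<and> h \<subseteq> {1..n} \<longrightarrow> h \<in> I)"

definition mingens :: "nat set set \<Rightarrow> nat set set" where
  "mingens I = {g \<in> I. \<forall>h\<in>I. h \<subseteq> g \<longrightarrow> h = g}"

definition gens_deg :: "nat set set \<Rightarrow> nat \<Rightarrow> nat set set" where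
  "gens_deg I l = {g \<in> mingens I. card g = l}"

definition facet_complex :: "nat set set \<Rightarrow> nat set set" where
  "facet_complex I = {F. \<exists>g\<in>mingens I. F \<subseteq> g}"

definition SR_complex :: "nat \<Rightarrow> nat set set \<Rightarrow> nat set set" where
  "SR_complex n I = {F. F \<subseteq> {1..n} \<and> F \<notin> I}"

definition fvec :: "nat set set \<Rightarrow> nat \<Rightarrow> nat" where
  "fvec D i = card {F \<in> D. card F = i + 1}"

definition f_ideal :: "nat \<Rightarrow> nat set set \<Rightarrow> bool" where
  "f_ideal n I \<longleftrightarrow> (\<forall>i<n. fvec (facet_complex I) i = fvec (SR_complex n I) i)"

definition sqcup :: "nat \<Rightarrow> nat set set \<Rightarrow> nat set set" where
  "sqcup n A = {insert i g | g i. g \<in> A \<and> i \<in> {1..n} \<and> i \<notin> g}"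

definition sqcap :: "nat set set \<Rightarrow> nat set set" where
  "sqcap A = {g - {i} | g i. g \<in> A \<and> i \<in> g \<and> g - {i} \<noteq> {}}"

definition gen_degrees :: "nat set set \<Rightarrow> nat set" where
  "gen_degrees I = card ` mingens I"

end

theory Submission
  imports Defs
begin

lemma sqcap_iter:
  assumes "\<forall>g\<in>A. finite g \<and> card g = d" "k < d"
  shows "(sqcap ^^ k) A = {h. card h = d - k \<and> (\<exists>g\<in>A. h \<subseteq> g)}"
  using assms(2)
proof (induction k)
  case 0
  show ?case
  proof (rule set_eqI, rule iffI)
    fix h assume "h \<in> (sqcap ^^ 0) A" thus "h \<in> {h. card h = d - 0 \<and> (\<exists>g\<in>A. h \<subseteq> g)}"
      using assms(1) by auto
  next
    fix h assume "h \<in> {h. card h = d - 0 \<and> (\<exists>g\<in>A. h \<subseteq> g)}"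
    then obtain g where g: "g \<in> A" "h \<subseteq> g" "card h = d" by auto
    hence "h = g" using assms(1) by (metis card_subset_eq)
    thus "h \<in> (sqcap ^^ 0) A" using g by simp
  qed
next
  case (Suc k)
  hence IH: "(sqcap ^^ k) A = {h. card h = d - k \<and> (\<exists>g\<in>A. h \<subseteq> g)}" by simp
  show ?case
  proof (rule set_eqI, rule iffI)
    fix h assume "h \<in> (sqcap ^^ Suc k) A"
    then obtain h' i where h': "h = h' - {i}" "h' \<in> (sqcap ^^ k) A" "i \<in> h'"
      by (auto simp: sqcap_def)
    then obtain g where g: "g \<in> A" "h' \<subseteq> g" "card h' = d - k" using IH by auto
    have "finite h'" using g assms(1) finite_subset by blast
    hence "card h = d - Suc k" using h' g by simp
    thus "h \<in> {h. card h = d - Suc k \<and> (\<exists>g\<in>A. h \<subseteq> g)}" using g h' by auto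
  next
    fix h assume "h \<in> {h. card h = d - Suc k \<and> (\<exists>g\<in>A. h \<subseteq> g)}"
    then obtain g where g: "g \<in> A" "h \<subseteq> g" "card h = d - Suc k" by auto
    have fg: "finite g" "card g = d" using g assms(1) by auto
    have "h \<noteq> g" using g fg Suc.prems by auto
    then obtain i where i: "i \<in> g" "i \<notin> h" using g by blast
    have fh: "finite h" using fg g finite_subset by blast
    have c: "card (insert i h) = d - k" using fh i g Suc.prems by simp
    have ne: "h \<noteq> {}" using g Suc.prems by auto
    have "insert i h \<in> (sqcap ^^ k) A" using IH c g i by auto
    moreover have "h = insert i h - {i}" using i by auto
    ultimately have "\<exists>g i. h = g - {i} \<and> g \<in> (sqcap ^^ k) A \<and> i \<in> g \<and> g - {i} \<noteq> {}"
      using ne by blast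
    thus "h \<in> (sqcap ^^ Suc k) A" unfolding sqcap_def by simp
  qed
qed

lemma sqcup_iter:
  assumes "\<forall>g\<in>A. g \<subseteq> {1..n} \<and> card g = d"
  shows "(sqcup n ^^ k) A = {h. h \<subseteq> {1..n} \<and> card h = d + k \<and> (\<exists>g\<in>A. g \<subseteq> h)}"
proof (induction k)
  case 0
  show ?case
  proof (rule set_eqI, rule iffI)
    fix h assume "h \<in> (sqcup n ^^ 0) A" thus "h \<in> {h. h \<subseteq> {1..n} \<and> card h = d + 0 \<and> (\<exists>g\<in>A. g \<subseteq> h)}"
      using assms(1) by auto
  next
    fix h assume "h \<in> {h. h \<subseteq> {1..n} \<and> card h = d + 0 \<and> (\<exists>g\<in>A. g \<subseteq> h)}"
    then obtain g where g: "g \<in> A" "g \<subseteq> h" "card h = d" "h \<subseteq> {1..n}" by auto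
    have "finite h" using g(4) finite_subset by blast
    hence "h = g" using assms(1) g by (metis card_subset_eq)
    thus "h \<in> (sqcup n ^^ 0) A" using g by simp
  qed
next
  case (Suc k)
  show ?case
  proof (rule set_eqI, rule iffI)
    fix h assume "h \<in> (sqcup n ^^ Suc k) A"
    then obtain h' i where h': "h = insert i h'" "h' \<in> (sqcup n ^^ k) A" "i \<notin> h'" "i \<in> {1..n}"
      by (auto simp: sqcup_def)
    then obtain g where g: "g \<in> A" "g \<subseteq> h'" "card h' = d + k" "h' \<subseteq> {1..n}" using Suc.IH by auto
    have "finite h'" using g finite_subset by blast
    hence "card h = d + Suc k" using h' g by simp
    thus "h \<in> {h. h \<subseteq> {1..n} \<and> card h = d + Suc k \<and> (\<exists>g\<in>A. g \<subseteq> h)}" using g h' by auto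
  next
    fix h assume "h \<in> {h. h \<subseteq> {1..n} \<and> card h = d + Suc k \<and> (\<exists>g\<in>A. g \<subseteq> h)}"
    then obtain g where g: "g \<in> A" "g \<subseteq> h" "card h = d + Suc k" "h \<subseteq> {1..n}" by auto
    have fg: "card g = d" using g assms(1) by auto
    have "h \<noteq> g" using g fg by auto
    then obtain i where i: "i \<in> h" "i \<notin> g" using g by blast
    have fh: "finite h" using g finite_subset by blast
    have c: "card (h - {i}) = d + k" using fh i g by simp
    have "h - {i} \<in> (sqcup n ^^ k) A" using Suc.IH c g i by auto
    moreover have "h = insert i (h - {i})" using i by auto
    ultimately have "\<exists>g' j. h = insert j g' \<and> g' \<in> (sqcup n ^^ k) A \<and> j \<in> {1..n} \<and> j \<notin> g'"
      using i g by blast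
    thus "h \<in> (sqcup n ^^ Suc k) A" unfolding sqcup_def by simp
  qed
qed

lemma mingen_below:
  assumes "I \<subseteq> Pow {1..n}" "F \<in> I" shows "\<exists>g\<in>mingens I. g \<subseteq> F"
  using assms(2)
proof (induction "card F" arbitrary: F rule: less_induct)
  case less
  show ?case
  proof (cases "F \<in> mingens I")
    case True thus ?thesis by auto
  next
    case False
    then obtain h where h: "h \<in> I" "h \<subseteq> F" "h \<noteq> F" using less.prems unfolding mingens_def by auto
    have "finite F" using less.prems assms(1) finite_subset by blast
    hence "card h < card F" using h by (meson psubsetI psubset_card_mono)
    then obtain g where "g \<in> mingens I" "g \<subseteq> h" using less.hyps h by blast
    thus ?thesis using h by blast
  qed
qed

theorem theorem6p3:
  fixes n :: nat and I :: "nat set set"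
  assumes "sqfree_monomial_ideal n I"
  shows "f_ideal n I \<longleftrightarrow>
    (\<forall>l\<in>{1..n}.
       real (card (gens_deg I l)) =
         (real (n choose l)
          - real (card (\<Union>d\<in>{d \<in> gen_degrees I. d > l}. (sqcap ^^ (d - l)) (gens_deg I d)))
          - real (card (\<Union>d\<in>{d \<in> gen_degrees I. d < l}. (sqcup n ^^ (l - d)) (gens_deg I d)))) / 2)"
proof -
  have IP: "I \<subseteq> Pow {1..n}" and up: "\<And>g h. g \<in> I \<Longrightarrow> g \<subseteq> h \<Longrightarrow> h \<subseteq> {1..n} \<Longrightarrow> h \<in> I"
    using assms unfolding sqfree_monomial_ideal_def by auto
  have MI: "mingens I \<subseteq> I" unfolding mingens_def by auto
  have MP: "\<And>g. g \<in> mingens I \<Longrightarrow> g \<subseteq> {1..n}" using MI IP by auto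
  have anti: "\<And>g h. g \<in> mingens I \<Longrightarrow> h \<in> mingens I \<Longrightarrow> g \<subseteq> h \<Longrightarrow> g = h"
    unfolding mingens_def by auto
  define Ap where "Ap l = {h. card h = l \<and> (\<exists>g\<in>mingens I. l < card g \<and> h \<subseteq> g)}" for l
  define Bp where "Bp l = {h. h \<subseteq> {1..n} \<and> card h = l \<and> (\<exists>g\<in>mingens I. card g < l \<and> g \<subseteq> h)}" for l
  have UA: "(\<Union>d\<in>{d \<in> gen_degrees I. d > l}. (sqcap ^^ (d - l)) (gens_deg I d)) = Ap l" if l1: "l \<ge> 1" for l
  proof -
    have "(\<Union>d\<in>{d \<in> gen_degrees I. d > l}. (sqcap ^^ (d - l)) (gens_deg I d))
        = (\<Union>d\<in>{d \<in> gen_degrees I. d > l}. {h. card h = l \<and> (\<exists>g\<in>gens_deg I d. h \<subseteq> g)})"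
    proof (rule SUP_cong[OF refl])
      fix d assume "d \<in> {d \<in> gen_degrees I. d > l}"
      hence dl: "l < d" "d - l < d" using l1 by auto
      have "\<forall>g\<in>gens_deg I d. finite g \<and> card g = d"
        using MP unfolding gens_deg_def by (auto intro: finite_subset)
      from sqcap_iter[OF this, of "d - l"] dl
      show "(sqcap ^^ (d - l)) (gens_deg I d) = {h. card h = l \<and> (\<exists>g\<in>gens_deg I d. h \<subseteq> g)}"
        by simp
    qed
    also have "\<dots> = Ap l" unfolding Ap_def gens_deg_def gen_degrees_def by (auto, metis)
    finally show ?thesis .
  qed
  have UB: "(\<Union>d\<in>{d \<in> gen_degrees I. d < l}. (sqcup n ^^ (l - d)) (gens_deg I d)) = Bp l" for l
  proof -
    have "(\<Union>d\<in>{d \<in> gen_degrees I. d < l}. (sqcup n ^^ (l - d)) (gens_deg I d))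
        = (\<Union>d\<in>{d \<in> gen_degrees I. d < l}. {h. h \<subseteq> {1..n} \<and> card h = l \<and> (\<exists>g\<in>gens_deg I d. g \<subseteq> h)})"
    proof (rule SUP_cong[OF refl])
      fix d assume "d \<in> {d \<in> gen_degrees I. d < l}"
      hence dl: "d < l" by auto
      have "\<forall>g\<in>gens_deg I d. g \<subseteq> {1..n} \<and> card g = d"
        using MP unfolding gens_deg_def by auto
      from sqcup_iter[OF this, of "l - d"] dl
      show "(sqcup n ^^ (l - d)) (gens_deg I d) = {h. h \<subseteq> {1..n} \<and> card h = l \<and> (\<exists>g\<in>gens_deg I d. g \<subseteq> h)}"
        by simp
    qed
    also have "\<dots> = Bp l" unfolding Bp_def gens_deg_def gen_degrees_def by (auto, metis)
    finally show ?thesis .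
  qed
  have finP: "finite (Pow {1..n})" by simp
  have GP: "gens_deg I l \<subseteq> Pow {1..n}" for l using MP unfolding gens_deg_def by auto
  have AP: "Ap l \<subseteq> Pow {1..n}" for l using MP unfolding Ap_def by blast
  have BP: "Bp l \<subseteq> Pow {1..n}" for l unfolding Bp_def by blast
  have fG: "finite (gens_deg I l)" for l using GP finP finite_subset by blast
  have fA: "finite (Ap l)" for l using AP finP finite_subset by blast
  have fB: "finite (Bp l)" for l using BP finP finite_subset by blast
  have disjA: "gens_deg I l \<inter> Ap l = {}" for l
  proof -
    { fix F assume F: "F \<in> gens_deg I l" "F \<in> Ap l"
      then obtain g where g: "g \<in> mingens I" "l < card g" "F \<subseteq> g" unfolding Ap_def by auto
      have "F = g" using anti F g unfolding gens_deg_def by auto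
      hence False using F g unfolding gens_deg_def by auto }
    thus ?thesis by blast
  qed
  have disjB: "gens_deg I l \<inter> Bp l = {}" for l
  proof -
    { fix F assume F: "F \<in> gens_deg I l" "F \<in> Bp l"
      then obtain g where g: "g \<in> mingens I" "card g < l" "g \<subseteq> F" unfolding Bp_def by auto
      have "g = F" using anti F g unfolding gens_deg_def by auto
      hence False using F g unfolding gens_deg_def by auto }
    thus ?thesis by blast
  qed
  have FC: "{F \<in> facet_complex I. card F = l} = gens_deg I l \<union> Ap l" for l
  proof (rule set_eqI, rule iffI)
    fix F assume "F \<in> {F \<in> facet_complex I. card F = l}"
    then obtain g where g: "g \<in> mingens I" "F \<subseteq> g" "card F = l" unfolding facet_complex_def by auto
    have fg: "finite g" using MP g finite_subset by blast
    have "card F \<le> card g" using fg g card_mono by blast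
    moreover have "card F = card g \<Longrightarrow> F = g" using fg g card_subset_eq by blast
    ultimately show "F \<in> gens_deg I l \<union> Ap l" using g unfolding gens_deg_def Ap_def by force
  next
    fix F assume "F \<in> gens_deg I l \<union> Ap l"
    thus "F \<in> {F \<in> facet_complex I. card F = l}"
      unfolding gens_deg_def Ap_def facet_complex_def by auto
  qed
  have Isub: "{F. F \<subseteq> {1..n} \<and> card F = l \<and> F \<in> I} = gens_deg I l \<union> Bp l" for l
  proof (rule set_eqI, rule iffI)
    fix F assume F: "F \<in> {F. F \<subseteq> {1..n} \<and> card F = l \<and> F \<in> I}"
    then obtain g where g: "g \<in> mingens I" "g \<subseteq> F" using mingen_below[OF IP] by blast
    have fF: "finite F" using F finite_subset by blast
    have "card g \<le> card F" using fF g card_mono by blast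
    hence "card g = card F \<or> card g < card F" by linarith
    thus "F \<in> gens_deg I l \<union> Bp l"
    proof
      assume "card g = card F"
      hence "F = g" using fF g card_subset_eq by metis
      thus ?thesis using g F unfolding gens_deg_def by auto
    next
      assume "card g < card F"
      thus ?thesis using g F unfolding Bp_def by auto
    qed
  next
    fix F assume "F \<in> gens_deg I l \<union> Bp l"
    thus "F \<in> {F. F \<subseteq> {1..n} \<and> card F = l \<and> F \<in> I}"
      using MP MI up unfolding gens_deg_def Bp_def by blast
  qed
  have SR: "{F \<in> SR_complex n I. card F = l} = {F. F \<subseteq> {1..n} \<and> card F = l} - (gens_deg I l \<union> Bp l)" for l
    using Isub[of l] unfolding SR_complex_def by blast
  have sub: "gens_deg I l \<union> Bp l \<subseteq> {F. F \<subseteq> {1..n} \<and> card F = l}" for l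
    using Isub[of l] by blast
  have nch: "card {F. F \<subseteq> {1..n} \<and> card F = l} = n choose l" for l
    using n_subsets[of "{1..n}" l] by simp
  have cS: "fvec (SR_complex n I) (l - 1) = (n choose l) - card (gens_deg I l) - card (Bp l)"
    and le: "card (gens_deg I l) + card (Bp l) \<le> n choose l" if "l \<ge> 1" for l
  proof -
    have e: "l - 1 + 1 = l" using that by simp
    have "card (gens_deg I l \<union> Bp l) = card (gens_deg I l) + card (Bp l)"
      using card_Un_disjoint[OF fG fB disjB] .
    moreover have "card (gens_deg I l \<union> Bp l) \<le> n choose l"
      using card_mono[OF _ sub[of l]] nch by (metis finite_Collect_subsets finite_atLeastAtMost finite_Collect_conjI)
    moreover have "card ({F. F \<subseteq> {1..n} \<and> card F = l} - (gens_deg I l \<union> Bp l)) =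
         (n choose l) - card (gens_deg I l \<union> Bp l)"
      using card_Diff_subset[OF finite_subset[OF sub[of l]] sub[of l]] fG fB nch by simp
    ultimately show "fvec (SR_complex n I) (l - 1) = (n choose l) - card (gens_deg I l) - card (Bp l)"
      and "card (gens_deg I l) + card (Bp l) \<le> n choose l"
      unfolding fvec_def e SR[of l] by simp_all
  qed
  have cF: "fvec (facet_complex I) (l - 1) = card (gens_deg I l) + card (Ap l)" if "l \<ge> 1" for l
  proof -
    have e: "l - 1 + 1 = l" using that by simp
    show ?thesis unfolding fvec_def e FC using card_Un_disjoint[OF fG fA disjA] by simp
  qed
  have step: "(fvec (facet_complex I) (l - 1) = fvec (SR_complex n I) (l - 1)) \<longleftrightarrow>
      real (card (gens_deg I l)) = (real (n choose l) - real (card (Ap l)) - real (card (Bp l))) / 2"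
    if "l \<ge> 1" for l
    using cF[OF that] cS[OF that] le[OF that] by (simp add: of_nat_diff) linarith
  have "f_ideal n I \<longleftrightarrow> (\<forall>l\<in>{1..n}. fvec (facet_complex I) (l - 1) = fvec (SR_complex n I) (l - 1))"
    unfolding f_ideal_def
  proof
    assume H: "\<forall>i<n. fvec (facet_complex I) i = fvec (SR_complex n I) i"
    show "\<forall>l\<in>{1..n}. fvec (facet_complex I) (l - 1) = fvec (SR_complex n I) (l - 1)"
      using H by auto
  next
    assume H: "\<forall>l\<in>{1..n}. fvec (facet_complex I) (l - 1) = fvec (SR_complex n I) (l - 1)"
    show "\<forall>i<n. fvec (facet_complex I) i = fvec (SR_complex n I) i"
    proof (intro allI impI)
      fix i assume "i < n" thus "fvec (facet_complex I) i = fvec (SR_complex n I) i"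
        using H[rule_format, of "i+1"] by simp
    qed
  qed
  also have "\<dots> \<longleftrightarrow> (\<forall>l\<in>{1..n}. real (card (gens_deg I l)) = (real (n choose l) - real (card (Ap l)) - real (card (Bp l))) / 2)"
    using step by auto
  also have "\<dots> \<longleftrightarrow> (\<forall>l\<in>{1..n}.
       real (card (gens_deg I l)) =
         (real (n choose l)
          - real (card (\<Union>d\<in>{d \<in> gen_degrees I. d > l}. (sqcap ^^ (d - l)) (gens_deg I d)))
          - real (card (\<Union>d\<in>{d \<in> gen_degrees I. d < l}. (sqcup n ^^ (l - d)) (gens_deg I d)))) / 2)"
    using UA UB by simp
  finally show ?thesis .
qed

end
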